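(* In the HTLC game described in the context, for any $k\in[1,T-1]$, the unique subgame perfect equilibrium in $G^{H}(k,\mathrm{red})$ is that every miner includes an unrelated transaction, and the utility of miner $i$ when doing so is $\lambda_i\big((T-k)f+f^{h}_{\mathcal{B}}\big)$.
   Context: Blockchain model: $n$ miners; miner $i$ has mining power $\lambda_i>0$, $\sum_i\lambda_i=1$, $\lambda_{\min}=\min_i\lambda_i$. Each round exactly one miner is chosen, miner $i$ with probability $\lambda_i$, and creates a block containing one transaction of her choice, receiving its fee. An unrelated transaction offering base fee $f$ is always available. A contract can be redeemed at most once. Miners are rational, non-myopic, with perfect information, maximizing expected tokens. HTLC: a contract holding $v^{\mathrm{dep}}$ tokens initiated in block $b_j$, with digest $dig_a=H(pre_a)$ and timeout $T$, redeemable via htlc-A (signature of $\mathcal{A}$ and $pre_a$; any block) or htlc-B (signature of $\mathcal{B}$; only at least $T$ blocks after initiation). The HTLC game has $T$ rounds creating $b_{j+1},\dots,b_{j+T}$. $\mathcal{A}$ publishes $tx^{h}_{\mathcal{A}}$ (redeems via htlc-A, fee $f^{h}_{\mathcal{A}}$, $f<f^{h}_{\mathcal{A}}<v^{\mathrm{dep}}$) in the first round, and $\mathcal{B}$ publishes $tx^{h}_{\mathcal{B}}$ (redeems via htlc-B, fee $f^{h}_{\mathcal{B}}<v^{\mathrm{dep}}$) with $f^{h}_{\mathcal{B}}>\frac{f^{h}_{\mathcal{A}}-f}{\lambda_{\min}}+f$. A miner can include an unrelated transaction (reward $f$) in any round; $tx^{h}_{\mathcal{A}}$ (reward $f^{h}_{\mathcal{A}}$)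 in any round while the HTLC is unredeemed; $tx^{h}_{\mathcal{B}}$ (reward $f^{h}_{\mathcal{B}}$) only in round $T$ while the HTLC is unredeemed. $G^{H}(k,s)$ denotes the subgame just before round $k\in[1,T]$ (with $T-k+1$ blocks remaining) with the HTLC redeemable ($\mathrm{red}$) or already redeemed ($\mathrm{irred}$). A miner's utility in a subgame is the expected tokens she accumulates within it. *)

theory Defs
  imports Complex_Main
begin

text \<open>HTLC game. Miners are indexed by 0..<n. States of the HTLC: redeemable / redeemed.\<close>

datatype hstate = Red | Irred

datatype haction = Unrel | TxA | TxB

definition valid_action :: "nat \<Rightarrow> nat \<Rightarrow> hstate \<Rightarrow> haction \<Rightarrow> bool" where
  "valid_action T k s a \<longleftrightarrow>
     a = Unrel \<or> (a = TxA \<and> s = Red) \<or> (a = TxB \<and> s = Red \<and> k = T)"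

definition reward :: "real \<Rightarrow> real \<Rightarrow> real \<Rightarrow> haction \<Rightarrow> real" where
  "reward f fA fB a = (case a of Unrel \<Rightarrow> f | TxA \<Rightarrow> fA | TxB \<Rightarrow> fB)"

definition next_state :: "haction \<Rightarrow> hstate \<Rightarrow> hstate" where
  "next_state a s = (case a of Unrel \<Rightarrow> s | _ \<Rightarrow> Irred)"

text \<open>A strategy profile: miner j, in round k, in state s, includes action sigma j k s.\<close>
type_synonym profile = "nat \<Rightarrow> nat \<Rightarrow> hstate \<Rightarrow> haction"

text \<open>Expected tokens of miner i accumulated in the next r rounds, starting at round k in state s.\<close>
fun util_aux :: "nat \<Rightarrow> (nat \<Rightarrow> real) \<Rightarrow> real \<Rightarrow> real \<Rightarrow> real \<Rightarrow> profile \<Rightarrow> nat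
                 \<Rightarrow> nat \<Rightarrow> nat \<Rightarrow> hstate \<Rightarrow> real" where
  "util_aux n lam f fA fB \<sigma> i 0 k s = 0"
| "util_aux n lam f fA fB \<sigma> i (Suc r) k s =
     (\<Sum>j<n. lam j * ((if j = i then reward f fA fB (\<sigma> j k s) else 0)
                      + util_aux n lam f fA fB \<sigma> i r (Suc k) (next_state (\<sigma> j k s) s)))"

definition util :: "nat \<Rightarrow> nat \<Rightarrow> (nat \<Rightarrow> real) \<Rightarrow> real \<Rightarrow> real \<Rightarrow> real \<Rightarrow> profile
                    \<Rightarrow> nat \<Rightarrow> nat \<Rightarrow> hstate \<Rightarrow> real" where
  "util T n lam f fA fB \<sigma> i k s = util_aux n lam f fA fB \<sigma> i (T + 1 - k) k s"

definition valid_strategy :: "nat \<Rightarrow> (nat \<Rightarrow> hstate \<Rightarrow> haction) \<Rightarrow> bool" where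
  "valid_strategy T \<tau> \<longleftrightarrow> (\<forall>k s. valid_action T k s (\<tau> k s))"

definition valid_profile :: "nat \<Rightarrow> nat \<Rightarrow> profile \<Rightarrow> bool" where
  "valid_profile T n \<sigma> \<longleftrightarrow> (\<forall>j<n. valid_strategy T (\<sigma> j))"

definition is_SPE :: "nat \<Rightarrow> nat \<Rightarrow> (nat \<Rightarrow> real) \<Rightarrow> real \<Rightarrow> real \<Rightarrow> real \<Rightarrow> profile
                      \<Rightarrow> nat \<Rightarrow> bool" where
  "is_SPE T n lam f fA fB \<sigma> k0 \<longleftrightarrow>
     valid_profile T n \<sigma> \<and>
     (\<forall>k s i \<tau>. k0 \<le> k \<and> k \<le> T \<and> i < n \<and> valid_strategy T \<tau> \<longrightarrow>
        util T n lam f fA fB (\<sigma>(i := \<tau>)) i k s \<le> util T n lam f fA fB \<sigma> i k s)"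

end

theory Submission
  imports Defs
begin

definition canon :: "nat \<Rightarrow> nat \<Rightarrow> nat \<Rightarrow> profile \<Rightarrow> bool" where
  "canon T n k \<sigma> \<longleftrightarrow> (\<forall>j<n. \<forall>k'. k \<le> k' \<and> k' \<le> T \<longrightarrow>
      \<sigma> j k' Red = (if k' = T then TxB else Unrel))"

lemma sum_upd:
  fixes G H :: "nat \<Rightarrow> real"
  assumes "i < n" "\<forall>j<n. j \<noteq> i \<longrightarrow> G j = H j"
  shows "(\<Sum>j<n. G j) = (\<Sum>j<n. H j) + (G i - H i)"
proof -
  have 1: "(\<Sum>j<n. G j) = G i + (\<Sum>j\<in>{..<n}-{i}. G j)" using assms(1) by (simp add: sum.remove)
  have 2: "(\<Sum>j<n. H j) = H i + (\<Sum>j\<in>{..<n}-{i}. H j)" using assms(1) by (simp add: sum.remove)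
  have 3: "(\<Sum>j\<in>{..<n}-{i}. G j) = (\<Sum>j\<in>{..<n}-{i}. H j)" using assms(2) by (intro sum.cong) auto
  show ?thesis using 1 2 3 by simp
qed

lemma sum_delta':
  fixes lam :: "nat \<Rightarrow> real"
  assumes "i < n" "(\<Sum>j<n. lam j) = 1"
  shows "(\<Sum>j<n. lam j * ((if j = i then x else 0) + c)) = lam i * x + c"
proof -
  have "(\<Sum>j<n. lam j * ((if j = i then x else 0) + c)) =
        (\<Sum>j<n. (if j = i then lam j * x else 0)) + (\<Sum>j<n. lam j) * c"
  proof -
    have "\<And>j. lam j * ((if j = i then x else 0) + c) = (if j = i then lam j * x else 0) + lam j * c"
      by (simp add: distrib_left)
    then show ?thesis by (simp add: sum.distrib sum_distrib_right)
  qed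
  also have "\<dots> = lam i * x + c" using assms by (simp add: sum.delta)
  finally show ?thesis .
qed

lemma L1:
  assumes "valid_profile T n \<sigma>" "i < n" "(\<Sum>j<n. lam j) = 1"
  shows "util_aux n lam f fA fB \<sigma> i r k Irred = real r * lam i * f"
proof (induction r arbitrary: k)
  case 0
  then show ?case by simp
next
  case (Suc r)
  have u: "\<forall>j<n. \<sigma> j k Irred = Unrel" using assms(1)
    by (auto simp: valid_profile_def valid_strategy_def valid_action_def)
  have "util_aux n lam f fA fB \<sigma> i (Suc r) k Irred =
     (\<Sum>j<n. lam j * ((if j = i then f else 0) + real r * lam i * f))"
    using u Suc by (auto intro!: sum.cong simp: reward_def next_state_def)
  also have "\<dots> = lam i * f + real r * lam i * f" using sum_delta' assms by blast
  finally show ?case by (simp add: algebra_simps)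
qed

lemma L2:
  "(\<forall>j<n. \<forall>k'\<ge>k. \<forall>s. \<sigma> j k' s = \<sigma>' j k' s) \<Longrightarrow>
   util_aux n lam f fA fB \<sigma> i r k s = util_aux n lam f fA fB \<sigma>' i r k s"
proof (induction r arbitrary: k s)
  case 0
  then show ?case by simp
next
  case (Suc r)
  have h: "\<forall>j<n. \<forall>k'\<ge>Suc k. \<forall>s. \<sigma> j k' s = \<sigma>' j k' s" using Suc.prems by auto
  show ?case using Suc.IH[OF h] Suc.prems by (auto intro!: sum.cong)
qed

lemma L3:
  assumes "valid_profile T n \<sigma>" "i < n" "(\<Sum>j<n. lam j) = 1"
  shows "k + r = Suc T \<Longrightarrow> canon T n k \<sigma> \<Longrightarrow> 1 \<le> r \<Longrightarrow>
    util_aux n lam f fA fB \<sigma> i r k Red = lam i * (real (r - 1) * f + fB)"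
proof (induction r arbitrary: k)
  case 0
  then show ?case by simp
next
  case (Suc r)
  show ?case
  proof (cases "r = 0")
    case True
    then have kT: "k = T" using Suc by simp
    have u: "\<forall>j<n. \<sigma> j k Red = TxB" using Suc.prems kT by (auto simp: canon_def)
    have "util_aux n lam f fA fB \<sigma> i (Suc r) k Red =
       (\<Sum>j<n. lam j * ((if j = i then fB else 0) + 0))"
      using u True by (auto intro!: sum.cong simp: reward_def)
    also have "\<dots> = lam i * fB" using sum_delta'[OF assms(2,3), of fB 0] by simp
    finally show ?thesis using True by simp
  next
    case False
    then have kT: "k < T" using Suc by simp
    have u: "\<forall>j<n. \<sigma> j k Red = Unrel" using Suc.prems kT by (auto simp: canon_def)
    have c: "canon T n (Suc k) \<sigma>" using Suc.prems by (auto simp: canon_def)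
    have ih: "util_aux n lam f fA fB \<sigma> i r (Suc k) Red = lam i * (real (r - 1) * f + fB)"
      using Suc.IH[OF _ c] Suc.prems False by simp
    have "util_aux n lam f fA fB \<sigma> i (Suc r) k Red =
       (\<Sum>j<n. lam j * ((if j = i then f else 0) + lam i * (real (r - 1) * f + fB)))"
      using u ih by (auto intro!: sum.cong simp: reward_def next_state_def)
    also have "\<dots> = lam i * f + lam i * (real (r - 1) * f + fB)" using sum_delta'[OF assms(2,3)] by simp
    finally show ?thesis using False by (simp add: of_nat_diff algebra_simps)
  qed
qed




lemma E:
  fixes lam :: "nat \<Rightarrow> real"
  assumes lam_pos: "\<forall>i<n. lam i > 0" and lam_sum: "(\<Sum>j<n. lam j) = 1"
    and KF: "\<forall>j<n. fA - f < lam j * (fB - f)" and fAB: "fA < fB" "f < fA"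
    and i: "i < n" and tau: "valid_strategy T \<tau>"
  shows "k + r = Suc T \<Longrightarrow>
    util_aux n lam f fA fB ((\<lambda>j k s. if s = Red \<and> k = T then TxB else Unrel)(i := \<tau>)) i r k s
    \<le> util_aux n lam f fA fB (\<lambda>j k s. if s = Red \<and> k = T then TxB else Unrel) i r k s"
proof (induction r arbitrary: k s)
  case 0
  then show ?case by simp
next
  case (Suc r)
  define s0 :: profile where "s0 = (\<lambda>j k s. if s = Red \<and> k = T then TxB else Unrel)"
  define s1 where "s1 = s0(i := \<tau>)"
  have v0: "valid_profile T n s0" by (auto simp: s0_def valid_profile_def valid_strategy_def valid_action_def)
  have c0: "canon T n (Suc k) s0" by (auto simp: s0_def canon_def)
  define X where "X a = reward f fA fB a + util_aux n lam f fA fB s0 i r (Suc k) (next_state a s)" for a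
  have ih: "\<And>s. util_aux n lam f fA fB s1 i r (Suc k) s \<le> util_aux n lam f fA fB s0 i r (Suc k) s"
    unfolding s1_def s0_def using Suc.prems by (intro Suc.IH) simp
  have "util_aux n lam f fA fB s1 i (Suc r) k s \<le>
     (\<Sum>j<n. lam j * ((if j = i then reward f fA fB (s1 j k s) else 0)
                      + util_aux n lam f fA fB s0 i r (Suc k) (next_state (s1 j k s) s)))"
    unfolding util_aux.simps
    by (intro sum_mono mult_left_mono add_left_mono ih) (use lam_pos in \<open>auto intro: less_imp_le\<close>)
  also have "\<dots> = (\<Sum>j<n. lam j * ((if j = i then reward f fA fB (s0 j k s) else 0)
                      + util_aux n lam f fA fB s0 i r (Suc k) (next_state (s0 j k s) s)))
      + (lam i * X (\<tau> k s) - lam i * X (s0 i k s))"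
    using sum_upd[OF i, where G = "\<lambda>j. lam j * ((if j = i then reward f fA fB (s1 j k s) else 0)
                      + util_aux n lam f fA fB s0 i r (Suc k) (next_state (s1 j k s) s))"
        and H = "\<lambda>j. lam j * ((if j = i then reward f fA fB (s0 j k s) else 0)
                      + util_aux n lam f fA fB s0 i r (Suc k) (next_state (s0 j k s) s))"]
    by (auto simp: s1_def X_def distrib_left)
  also have "\<dots> \<le> util_aux n lam f fA fB s0 i (Suc r) k s + 0"
  proof -
    have va: "valid_action T k s (\<tau> k s)" using tau by (simp add: valid_strategy_def)
    have "X (\<tau> k s) \<le> X (s0 i k s)"
    proof (cases s)
      case Irred
      then show ?thesis using va by (simp add: valid_action_def s0_def)
    next
      case Red
      show ?thesis
      proof (cases "r = 0")
        case True
        then have "k = T" using Suc by simp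
        then show ?thesis using True Red fAB
          by (cases "\<tau> k s") (auto simp: X_def s0_def reward_def)
      next
        case False
        then have kT: "k \<noteq> T" using Suc by simp
        have uR: "util_aux n lam f fA fB s0 i r (Suc k) Red = lam i * (real (r - 1) * f + fB)"
          using L3[OF v0 i lam_sum, of "Suc k" r] Suc.prems c0 False by simp
        have uI: "util_aux n lam f fA fB s0 i r (Suc k) Irred = real r * lam i * f"
          using L1[OF v0 i lam_sum] by simp
        have s0k: "s0 i k s = Unrel" using kT by (simp add: s0_def)
        have kf: "fA - f < lam i * (fB - f)" using KF i by simp
        have rr: "real (r - 1) = real r - 1" using False by (simp add: of_nat_diff)
        have "X TxA \<le> X Unrel"
          using kf Red uR uI rr by (simp add: X_def reward_def next_state_def algebra_simps)
        then show ?thesis using va Red kT s0k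
          by (cases "\<tau> k s") (auto simp: valid_action_def)
      qed
    qed
    then have "lam i * X (\<tau> k s) \<le> lam i * X (s0 i k s)"
      using lam_pos i by (intro mult_left_mono) auto
    then show ?thesis by simp
  qed
  finally have "util_aux n lam f fA fB s1 i (Suc r) k s \<le> util_aux n lam f fA fB s0 i (Suc r) k s"
    by simp
  then show ?case by (simp only: s1_def s0_def)
qed


lemma U:
  fixes lam :: "nat \<Rightarrow> real"
  assumes SPE: "is_SPE T n lam f fA fB \<sigma> k0"
    and lam_pos: "\<forall>i<n. lam i > 0" and lam_sum: "(\<Sum>j<n. lam j) = 1"
    and KF: "\<forall>j<n. fA - f < lam j * (fB - f)" and fAB: "fA < fB" "f < fA"
  shows "k0 \<le> k \<Longrightarrow> k + r = Suc T \<Longrightarrow> 1 \<le> r \<Longrightarrow> canon T n k \<sigma>"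
proof (induction r arbitrary: k)
  case 0
  then show ?case by simp
next
  case (Suc r)
  have valid: "valid_profile T n \<sigma>" using SPE by (simp add: is_SPE_def)
  have cs: "r \<ge> 1 \<Longrightarrow> canon T n (Suc k) \<sigma>" using Suc by simp
  define X where "X j a = reward f fA fB a + util_aux n lam f fA fB \<sigma> j r (Suc k) (next_state a Red)" for j a
  have dev: "X j a \<le> X j (\<sigma> j k Red)" if j: "j < n" and va: "valid_action T k Red a" for j a
  proof -
    define \<tau> where "\<tau> = (\<sigma> j)(k := (\<sigma> j k)(Red := a))"
    have vt: "valid_strategy T \<tau>"
      using valid j va by (auto simp: \<tau>_def valid_profile_def valid_strategy_def)
    have "util T n lam f fA fB (\<sigma>(j := \<tau>)) j k Red \<le> util T n lam f fA fB \<sigma> j k Red"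
      using SPE Suc.prems j vt by (auto simp: is_SPE_def)
    moreover have "T + 1 - k = Suc r" using Suc.prems by simp
    ultimately have le: "util_aux n lam f fA fB (\<sigma>(j := \<tau>)) j (Suc r) k Red
        \<le> util_aux n lam f fA fB \<sigma> j (Suc r) k Red" by (simp add: util_def)
    have cong: "util_aux n lam f fA fB (\<sigma>(j := \<tau>)) j r (Suc k) x = util_aux n lam f fA fB \<sigma> j r (Suc k) x" for x
      by (rule L2) (auto simp: \<tau>_def)
    have "util_aux n lam f fA fB (\<sigma>(j := \<tau>)) j (Suc r) k Red =
      (\<Sum>j'<n. lam j' * ((if j' = j then reward f fA fB ((\<sigma>(j := \<tau>)) j' k Red) else 0)
                      + util_aux n lam f fA fB \<sigma> j r (Suc k) (next_state ((\<sigma>(j := \<tau>)) j' k Red) Red)))"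
      by (simp add: cong)
    also have "\<dots> = util_aux n lam f fA fB \<sigma> j (Suc r) k Red + (lam j * X j a - lam j * X j (\<sigma> j k Red))"
      using sum_upd[OF j, where G = "\<lambda>j'. lam j' * ((if j' = j then reward f fA fB ((\<sigma>(j := \<tau>)) j' k Red) else 0)
                      + util_aux n lam f fA fB \<sigma> j r (Suc k) (next_state ((\<sigma>(j := \<tau>)) j' k Red) Red))"
        and H = "\<lambda>j'. lam j' * ((if j' = j then reward f fA fB (\<sigma> j' k Red) else 0)
                      + util_aux n lam f fA fB \<sigma> j r (Suc k) (next_state (\<sigma> j' k Red) Red))"]
      by (auto simp: \<tau>_def X_def distrib_left)
    finally have "lam j * X j a \<le> lam j * X j (\<sigma> j k Red)" using le by simp
    then show ?thesis using lam_pos j by simp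
  qed
  show ?case unfolding canon_def
  proof (intro allI impI)
    fix j k' assume j: "j < n" and k': "k \<le> k' \<and> k' \<le> T"
    show "\<sigma> j k' Red = (if k' = T then TxB else Unrel)"
    proof (cases "k' = k")
      case False
      then have "r \<ge> 1" using k' Suc.prems by simp
      then show ?thesis using cs j k' False by (simp add: canon_def)
    next
      case True
      have vb: "valid_action T k Red (\<sigma> j k Red)"
        using valid j by (simp add: valid_profile_def valid_strategy_def)
      show ?thesis
      proof (cases "r = 0")
        case r0: True
        then have kT: "k = T" using Suc.prems by simp
        have "X j TxB \<le> X j (\<sigma> j k Red)" using dev j kT by (simp add: valid_action_def)
        then have "\<sigma> j k Red = TxB" using r0 fAB
          by (cases "\<sigma> j k Red") (auto simp: X_def reward_def)
        then show ?thesis using True kT by simp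
      next
        case False
        then have kT: "k \<noteq> T" using Suc.prems by simp
        have c: "canon T n (Suc k) \<sigma>" using cs False by simp
        have uR: "util_aux n lam f fA fB \<sigma> j r (Suc k) Red = lam j * (real (r - 1) * f + fB)"
          using L3[OF valid j lam_sum, of "Suc k" r] Suc.prems c False by simp
        have uI: "util_aux n lam f fA fB \<sigma> j r (Suc k) Irred = real r * lam j * f"
          using L1[OF valid j lam_sum] by simp
        have kf: "fA - f < lam j * (fB - f)" using KF j by simp
        have rr: "real (r - 1) = real r - 1" using False by (simp add: of_nat_diff)
        have "X j TxA < X j Unrel"
          using kf uR uI rr by (simp add: X_def reward_def next_state_def algebra_simps)
        moreover have "X j Unrel \<le> X j (\<sigma> j k Red)" using dev j by (simp add: valid_action_def)
        ultimately have "\<sigma> j k Red = Unrel" using vb kT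
          by (cases "\<sigma> j k Red") (auto simp: valid_action_def)
        then show ?thesis using True kT by simp
      qed
    qed
  qed
qed


theorem lemma9:
  fixes n T k :: nat and lam :: "nat \<Rightarrow> real" and f fA fB vdep :: real
  assumes lam_pos: "\<forall>i<n. lam i > 0"
    and lam_sum: "(\<Sum>i<n. lam i) = 1"
    and fA_bounds: "f < fA" "fA < vdep"
    and fB_lt: "fB < vdep"
    and fB_gt: "fB > (fA - f) / Min (lam ` {..<n}) + f"
    and k_range: "1 \<le> k" "k \<le> T - 1"
  shows "(\<exists>\<sigma>. is_SPE T n lam f fA fB \<sigma> k) \<and>
         (\<forall>\<sigma>. is_SPE T n lam f fA fB \<sigma> k \<longrightarrow>
            (\<forall>j<n. \<sigma> j k Red = Unrel) \<and>
            (\<forall>i<n. util T n lam f fA fB \<sigma> i k Red = lam i * (real (T - k) * f + fB)))"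
proof -
  have n0: "n \<noteq> 0" using lam_sum by (cases n) auto
  define m where "m = Min (lam ` {..<n})"
  have fin: "finite (lam ` {..<n})" "lam ` {..<n} \<noteq> {}" using n0 by auto
  have mpos: "m > 0" using Min_in[OF fin] lam_pos unfolding m_def by auto
  have mle: "m \<le> lam j" if "j < n" for j using that fin unfolding m_def by auto
  have lle1: "lam j \<le> 1" if "j < n" for j
  proof -
    have "lam j \<le> (\<Sum>i<n. lam i)"
      using that lam_pos by (intro member_le_sum) (auto intro: less_imp_le)
    then show ?thesis using lam_sum by simp
  qed
  have KF: "\<forall>j<n. fA - f < lam j * (fB - f)"
  proof (intro allI impI)
    fix j assume j: "j < n"
    have "(fA - f) / lam j \<le> (fA - f) / m"
      using fA_bounds(1) mpos mle[OF j] by (intro divide_left_mono) auto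
    then have "(fA - f) / lam j < fB - f" using fB_gt m_def by simp
    then show "fA - f < lam j * (fB - f)" using lam_pos j by (simp add: pos_divide_less_eq mult.commute)
  qed
  have fAB: "fA < fB"
  proof -
    obtain j where j: "j < n" using n0 by auto
    have "fA - f < lam j * (fB - f)" using KF j by simp
    moreover have "fB - f > 0"
    proof (rule ccontr)
      assume "\<not> fB - f > 0"
      then have "lam j * (fB - f) \<le> 0" using lam_pos j
        by (intro mult_nonneg_nonpos) (auto intro: less_imp_le)
      then show False using calculation fA_bounds(1) by simp
    qed
    moreover have "lam j * (fB - f) \<le> fB - f"
    proof -
      have "0 \<le> (1 - lam j) * (fB - f)" using lle1[OF j] calculation(2) by simp
      then show ?thesis by (simp add: algebra_simps)
    qed
    ultimately show ?thesis by linarith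
  qed
  define s0 :: profile where "s0 = (\<lambda>j k s. if s = Red \<and> k = T then TxB else Unrel)"
  have v0: "valid_profile T n s0" by (auto simp: s0_def valid_profile_def valid_strategy_def valid_action_def)
  have spe0: "is_SPE T n lam f fA fB s0 k"
    unfolding is_SPE_def
  proof (intro conjI v0 allI impI)
    fix k' s i \<tau> assume h: "k \<le> k' \<and> k' \<le> T \<and> i < n \<and> valid_strategy T \<tau>"
    show "util T n lam f fA fB (s0(i := \<tau>)) i k' s \<le> util T n lam f fA fB s0 i k' s"
      unfolding util_def s0_def
      by (rule E[OF lam_pos lam_sum KF fAB fA_bounds(1)]) (use h in auto)
  qed
  have uniq: "(\<forall>j<n. \<sigma> j k Red = Unrel) \<and>
            (\<forall>i<n. util T n lam f fA fB \<sigma> i k Red = lam i * (real (T - k) * f + fB))"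
    if spe: "is_SPE T n lam f fA fB \<sigma> k" for \<sigma>
  proof -
    have c: "canon T n k \<sigma>"
      by (rule U[OF spe lam_pos lam_sum KF fAB fA_bounds(1), of k "T + 1 - k"]) (use k_range in auto)
    have valid: "valid_profile T n \<sigma>" using spe by (simp add: is_SPE_def)
    have kT: "k < T" using k_range by simp
    show ?thesis
    proof
      show "\<forall>j<n. \<sigma> j k Red = Unrel" using c kT by (auto simp: canon_def)
      show "\<forall>i<n. util T n lam f fA fB \<sigma> i k Red = lam i * (real (T - k) * f + fB)"
      proof (intro allI impI)
        fix i assume i: "i < n"
        have "util_aux n lam f fA fB \<sigma> i (T + 1 - k) k Red = lam i * (real (T + 1 - k - 1) * f + fB)"
          by (rule L3[OF valid i lam_sum]) (use c kT in auto)
        then show "util T n lam f fA fB \<sigma> i k Red = lam i * (real (T - k) * f + fB)"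
          by (simp add: util_def)
      qed
    qed
  qed
  show ?thesis using spe0 uniq by blast
qed

end
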